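(* Let $S$ be a nondegenerate $n$-dimensional simplex with $S\subset Q_n\subset nS$. Then replacing any vertex of $S$ by an arbitrary point of $Q_n$ yields a simplex whose volume does not exceed $\mathrm{vol}(S)$.
   Context: $Q_n=[0,1]^n$. $nS$ denotes the image of $S$ under the homothety with center at the center of gravity of $S$ and ratio $n$. *)

theory Defs
  imports "HOL-Analysis.Analysis"
begin

text \<open>The unit cube Q_n = [0,1]^n, with n = CARD('n).\<close>
definition unit_cube :: "(real^'n) set" where
  "unit_cube = {x. \<forall>i. 0 \<le> x $ i \<and> x $ i \<le> 1}"

text \<open>Simplex with vertices v 0, ..., v n, where n = CARD('n).\<close>
definition simplex_of :: "(nat \<Rightarrow> real^'n) \<Rightarrow> (real^'n) set" where
  "simplex_of v = convex hull (v ` {..CARD('n)})"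

text \<open>Nondegenerate n-simplex: n+1 distinct affinely independent vertices.\<close>
definition nondegenerate_simplex :: "(nat \<Rightarrow> real^'n) \<Rightarrow> bool" where
  "nondegenerate_simplex v \<longleftrightarrow>
     inj_on v {..CARD('n)} \<and> \<not> affine_dependent (v ` {..CARD('n)})"

text \<open>Center of gravity of the simplex (= average of its vertices).\<close>
definition simplex_centroid :: "(nat \<Rightarrow> real^'n) \<Rightarrow> real^'n" where
  "simplex_centroid v = (1 / real (CARD('n) + 1)) *\<^sub>R (\<Sum>i\<le>CARD('n). v i)"

text \<open>Image of the simplex under the homothety with center the centroid and ratio r.\<close>
definition scaled_simplex :: "real \<Rightarrow> (nat \<Rightarrow> real^'n) \<Rightarrow> (real^'n) set" where
  "scaled_simplex r v =
     (\<lambda>x. simplex_centroid v + r *\<^sub>R (x - simplex_centroid v)) ` simplex_of v"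

end

theory Submission
  imports Defs
begin


typedef 'a wo = "UNIV :: 'a::finite set" by simp

definition wo_idx :: "'a::finite \<Rightarrow> nat" where "wo_idx = (SOME f. inj f)"

lemma inj_wo_idx: "inj (wo_idx :: 'a::finite \<Rightarrow> nat)"
proof -
  obtain f :: "'a \<Rightarrow> nat" and n where "f ` UNIV = {i. i < n} \<and> inj_on f UNIV"
    using finite_imp_inj_to_nat_seg[of "UNIV :: 'a set"] by auto
  then have "\<exists>f::'a \<Rightarrow> nat. inj f" by blast
  then show ?thesis unfolding wo_idx_def by (rule someI_ex)
qed

instance wo :: (finite) finite
proof
  have "(UNIV :: 'a wo set) = Abs_wo ` UNIV"
    by (metis Rep_wo_inverse surj_def)
  then show "finite (UNIV :: 'a wo set)" by (metis finite finite_imageI)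
qed

instantiation wo :: (finite) linorder
begin
definition less_eq_wo :: "'a wo \<Rightarrow> 'a wo \<Rightarrow> bool" where
  "less_eq_wo x y \<longleftrightarrow> wo_idx (Rep_wo x) \<le> wo_idx (Rep_wo y)"
definition less_wo :: "'a wo \<Rightarrow> 'a wo \<Rightarrow> bool" where
  "less_wo x y \<longleftrightarrow> wo_idx (Rep_wo x) < wo_idx (Rep_wo y)"
instance
proof
  fix x y z :: "'a wo"
  show "(x < y) = (x \<le> y \<and> \<not> y \<le> x)" by (auto simp: less_eq_wo_def less_wo_def)
  show "x \<le> x" by (simp add: less_eq_wo_def)
  show "x \<le> y \<Longrightarrow> y \<le> z \<Longrightarrow> x \<le> z" by (simp add: less_eq_wo_def)
  show "x \<le> y \<Longrightarrow> y \<le> x \<Longrightarrow> x = y"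
    using inj_wo_idx[where 'a='a] by (metis antisym less_eq_wo_def Rep_wo_inject injD)
  show "x \<le> y \<or> y \<le> x" by (auto simp: less_eq_wo_def)
qed
end

instance wo :: (finite) wellorder
proof
  fix P :: "'a wo \<Rightarrow> bool" and a
  assume H: "\<And>x. (\<And>y. y < x \<Longrightarrow> P y) \<Longrightarrow> P x"
  show "P a"
    by (induct a rule: measure_induct_rule[of "\<lambda>x. wo_idx (Rep_wo x)"]) (rule H, simp add: less_wo_def)
qed

lemma card_wo: "CARD('a::finite wo) = CARD('a)"
  by (metis type_definition.card type_definition_wo)

definition wphi :: "real^'a::finite \<Rightarrow> real^('a wo)" where
  "wphi x = (\<chi> i. x $ Rep_wo i)"
definition wpsi :: "real^('a::finite wo) \<Rightarrow> real^'a" where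
  "wpsi y = (\<chi> i. y $ Abs_wo i)"

lemma wpsi_wphi[simp]: "wpsi (wphi x) = x"
  by (simp add: wpsi_def wphi_def Abs_wo_inverse vec_eq_iff)
lemma wphi_wpsi[simp]: "wphi (wpsi y) = y"
  by (simp add: wpsi_def wphi_def Rep_wo_inverse vec_eq_iff)

lemma linear_wphi: "linear wphi"
  by (auto simp: linear_iff wphi_def vec_eq_iff)
lemma linear_wpsi: "linear wpsi"
  by (auto simp: linear_iff wpsi_def vec_eq_iff)

lemma prod_Basis_cart: "(\<Prod>b\<in>(Basis :: (real^'n) set). f b) = (\<Prod>i\<in>UNIV. f (axis i 1))"
proof -
  have B: "(Basis :: (real^'n) set) = (\<lambda>i. axis i 1) ` UNIV"
    by (auto simp: Basis_vec_def)
  have "inj (\<lambda>i::'n. axis i (1::real))" by (auto simp: inj_def axis_eq_axis)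
  then show ?thesis unfolding B by (simp add: prod.reindex)
qed

lemma lborel_wo: "distr lborel borel (wphi :: real^'a::finite \<Rightarrow> _) = lborel"
proof (rule lborel_eqI[symmetric])
  show "sets (distr lborel borel wphi) = sets borel" by simp
  have meas: "wphi \<in> borel_measurable (lborel :: (real^'a) measure)"
  proof -
    have "continuous_on UNIV wphi" using linear_wphi
      by (intro linear_continuous_on) (simp add: linear_conv_bounded_linear)
    then have "wphi \<in> borel_measurable borel" by (rule borel_measurable_continuous_onI)
    then show ?thesis by simp
  qed
  fix l u :: "real^('a wo)"
  assume le: "\<And>b. b \<in> Basis \<Longrightarrow> l \<bullet> b \<le> u \<bullet> b"
  have le': "\<And>i. l $ i \<le> u $ i"
  proof -
    fix i :: "'a wo"
    have "axis i (1::real) \<in> (Basis :: (real^'a wo) set)" by (auto simp: Basis_vec_def)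
    from le[OF this] show "l $ i \<le> u $ i" by (simp add: inner_axis)
  qed
  have pre: "wphi -` box l u = box (wpsi l) (wpsi u)"
  proof -
    have q: "\<And>Q. (\<forall>k. Q k (Rep_wo k)) \<longleftrightarrow> (\<forall>i. Q (Abs_wo i) i)"
      by (metis Rep_wo_inverse Abs_wo_inverse UNIV_I)
    show ?thesis
      unfolding set_eq_iff vimage_def mem_Collect_eq mem_box_cart wphi_def wpsi_def vec_lambda_beta
      using q[of "\<lambda>k r. l $ k < _ $ r \<and> _ $ r < u $ k"] by blast
  qed
  have le2: "\<And>b. b \<in> Basis \<Longrightarrow> wpsi l \<bullet> b \<le> wpsi u \<bullet> b"
    by (auto simp: Basis_vec_def inner_axis wpsi_def le')
  have "emeasure (distr lborel borel wphi) (box l u) = emeasure lborel (box (wpsi l) (wpsi u))"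
    using meas by (simp add: emeasure_distr pre)
  also have "\<dots> = (\<Prod>i\<in>UNIV. (u - l) $ Abs_wo i)"
    using le2 by (simp add: prod_Basis_cart inner_axis wpsi_def)
  also have "\<dots> = (\<Prod>k\<in>UNIV. (u - l) $ k)"
  proof -
    have "bij (Abs_wo :: 'a \<Rightarrow> 'a wo)"
      by (metis bij_betw_def type_definition.Abs_image type_definition_wo inj_on_def Abs_wo_inject UNIV_I)
    then show ?thesis by (metis bij_betw_def prod.reindex_bij_betw)
  qed
  finally show "emeasure (distr lborel borel wphi) (box l u) = (\<Prod>b\<in>Basis. (u - l) \<bullet> b)"
    by (simp add: prod_Basis_cart inner_axis)
qed

lemma measure_wphi:
  fixes A :: "(real^'a::finite) set"
  assumes A: "A \<in> sets borel"
  shows "measure lebesgue (wphi ` A) = measure lebesgue A"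
proof -
  have eq: "wphi ` A = wpsi -` A"
    by (auto simp: image_iff) (metis wphi_wpsi)
  have cpsi: "continuous_on UNIV wpsi" using linear_wpsi
    by (intro linear_continuous_on) (simp add: linear_conv_bounded_linear)
  have cphi: "continuous_on UNIV wphi" using linear_wphi
    by (intro linear_continuous_on) (simp add: linear_conv_bounded_linear)
  have mpsi: "wpsi \<in> borel_measurable borel" by (rule borel_measurable_continuous_onI[OF cpsi])
  have mphi: "(wphi :: real^'a \<Rightarrow> _) \<in> borel_measurable lborel"
    using borel_measurable_continuous_onI[OF cphi] by simp
  have B: "wpsi -` A \<in> sets borel"
    using measurable_sets[OF mpsi A] by simp
  have "measure lebesgue (wphi ` A) = measure lborel (wpsi -` A)"
    using B eq by simp
  also have "\<dots> = measure (distr lborel borel wphi) (wpsi -` A)"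
    by (simp add: lborel_wo)
  also have "\<dots> = measure lborel (wphi -` (wpsi -` A))"
    using B mphi by (simp add: measure_distr)
  also have "wphi -` (wpsi -` A) = A" by auto
  finally show ?thesis using A by simp
qed

lemma hull_param:
  fixes w :: "nat \<Rightarrow> real^'m::finite" and g :: "'m \<Rightarrow> nat"
  assumes bij: "bij_betw g UNIV ({..N} - {b})" and b: "b \<le> N"
  defines "M \<equiv> (\<chi> r s. (w (g s) - w b) $ r)"
  shows "convex hull (w ` {..N}) = (\<lambda>z. w b + M *v z) ` (convex hull (insert 0 (range (\<lambda>s. axis s (1::real)))))"
proof -
  have lin: "linear ((*v) M)" by simp
  have col: "\<And>s. M *v axis s 1 = w (g s) - w b"
    by (simp add: matrix_vector_mult_basis column_def M_def vec_eq_iff)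
  have img: "(\<lambda>z. w b + M *v z) ` (insert 0 (range (\<lambda>s. axis s (1::real)))) = w ` {..N}"
  proof -
    have "(\<lambda>z. w b + M *v z) ` (insert 0 (range (\<lambda>s. axis s (1::real)))) = insert (w b) (range (\<lambda>s. w (g s)))"
      by (auto simp: col image_iff)
    also have "range (\<lambda>s. w (g s)) = w ` ({..N} - {b})"
      using bij by (metis bij_betw_imp_surj_on image_image)
    also have "insert (w b) (w ` ({..N} - {b})) = w ` {..N}" using b by auto
    finally show ?thesis .
  qed
  have "(\<lambda>z. w b + M *v z) ` (convex hull (insert 0 (range (\<lambda>s. axis s (1::real)))))
      = (+) (w b) ` ((*v) M ` (convex hull (insert 0 (range (\<lambda>s. axis s (1::real))))))"
    by (simp add: image_image)
  also have "\<dots> = convex hull ((+) (w b) ` ((*v) M ` (insert 0 (range (\<lambda>s. axis s (1::real))))))"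
    by (simp only: convex_hull_linear_image[OF lin] convex_hull_translation)
  also have "\<dots> = convex hull (w ` {..N})"
    using img by (simp add: image_image)
  finally show ?thesis by simp
qed


lemma vol_replace_wo:
  fixes u :: "nat \<Rightarrow> real^'m::{finite,wellorder}" and c :: "nat \<Rightarrow> real"
  assumes j: "j \<le> CARD('m)" and c1: "sum c {..CARD('m)} = 1"
    and y: "y = (\<Sum>k\<le>CARD('m). c k *\<^sub>R u k)" and cj: "\<bar>c j\<bar> \<le> 1"
  shows "measure lebesgue (convex hull ((u(j:=y)) ` {..CARD('m)}))
         \<le> measure lebesgue (convex hull (u ` {..CARD('m)}))"
proof -
  define N where "N = CARD('m::{finite,wellorder})"
  define b where "b = (if j = 0 then 1 else (0::nat))"
  have N1: "N \<ge> 1" unfolding N_def by (simp add: Suc_leI)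
  have bN: "b \<le> N" "b \<noteq> j" using N1 by (auto simp: b_def)
  have "card ({..N} - {b}) = CARD('m::{finite,wellorder})" using bN by (simp add: N_def)
  then obtain g where g: "bij_betw g (UNIV::'m::{finite,wellorder} set) ({..N} - {b})"
    by (metis bij_betw_iff_card finite_Diff finite_atMost finite_class.finite_UNIV)
  have ginj: "inj g" using g by (simp add: bij_betw_def)
  define D :: "(real^'m::{finite,wellorder}) set" where "D = convex hull (insert 0 (range (\<lambda>s. axis s (1::real))))"
  have Dm: "D \<in> lmeasurable" unfolding D_def
    by (intro lmeasurable_compact compact_convex_hull finite_imp_compact) simp
  have vol: "measure lebesgue (convex hull (w ` {..N})) = \<bar>det ((\<chi> r s. (w (g s) - w b) $ r) :: real^'m::{finite,wellorder}^'m::{finite,wellorder})\<bar> * measure lebesgue D"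
    for w :: "nat \<Rightarrow> real^'m::{finite,wellorder}"
  proof -
    define A where "A = ((\<chi> r s. (w (g s) - w b) $ r) :: real^'m::{finite,wellorder}^'m::{finite,wellorder})"
    have "measure lebesgue (convex hull (w ` {..N})) = measure lebesgue ((\<lambda>z. w b + A *v z) ` D)"
      using hull_param[OF g bN(1), of w] unfolding A_def D_def by simp
    also have "(\<lambda>z. w b + A *v z) ` D = (+) (w b) ` ((*v) A ` D)" by (simp add: image_image)
    also have "measure lebesgue \<dots> = measure lebesgue ((*v) A ` D)" by (rule measure_translation)
    also have "\<dots> = \<bar>det (matrix ((*v) A))\<bar> * measure lebesgue D"
      by (rule measure_linear_image) (simp_all add: Dm)
    finally show ?thesis by (simp add: A_def)
  qed
  define M where "M = ((\<chi> r s. (u (g s) - u b) $ r) :: real^'m::{finite,wellorder}^'m::{finite,wellorder})"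
  define u' where "u' = u(j:=y)"
  define M' where "M' = ((\<chi> r s. (u' (g s) - u' b) $ r) :: real^'m::{finite,wellorder}^'m::{finite,wellorder})"
  have "j \<in> {..N} - {b}" using j bN by (auto simp: N_def)
  then obtain s0 where s0: "g s0 = j" using g by (metis bij_betw_iff_bijections)
  define cv where "cv = (\<chi> s. c (g s))"
  have Mcv: "M *v cv = y - u b"
  proof -
    have "M *v cv = (\<Sum>s\<in>UNIV. c (g s) *\<^sub>R (u (g s) - u b))"
      by (simp add: vec_eq_iff matrix_vector_mult_def M_def cv_def sum_component mult.commute)
    also have "\<dots> = (\<Sum>k\<in>{..N} - {b}. c k *\<^sub>R (u k - u b))"
      using sum.reindex_bij_betw[OF g, of "\<lambda>k. c k *\<^sub>R (u k - u b)"] by simp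
    also have "\<dots> = (\<Sum>k\<in>{..N}. c k *\<^sub>R (u k - u b))"
      using bN by (subst sum.remove[of "{..N}" b]) auto
    also have "\<dots> = (\<Sum>k\<in>{..N}. c k *\<^sub>R u k) - (\<Sum>k\<in>{..N}. c k) *\<^sub>R u b"
      by (simp add: scaleR_diff_right sum_subtractf scaleR_sum_left)
    also have "\<dots> = y - u b" using y c1 by (simp add: N_def atMost_def)
    finally show ?thesis .
  qed
  have M'eq: "M' = (\<chi> r s'. if s' = s0 then (M *v cv)$r else M$r$s')"
  proof -
    have "\<And>s'. s' \<noteq> s0 \<Longrightarrow> g s' \<noteq> j" using ginj s0 by (metis injD)
    moreover have "\<And>r. (M *v cv) $ r = y $ r - u b $ r" by (simp add: Mcv)
    ultimately show ?thesis
      using bN s0 unfolding vec_eq_iff by (auto simp: M'_def u'_def) (simp add: M_def)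
  qed
  have detM': "det M' = c j * det M"
    unfolding M'eq cramer_lemma by (simp add: cv_def s0)
  have "measure lebesgue (convex hull (u' ` {..N})) = \<bar>det M'\<bar> * measure lebesgue D"
    using vol[of u'] by (simp add: M'_def)
  also have "\<dots> = \<bar>c j\<bar> * (\<bar>det M\<bar> * measure lebesgue D)" by (simp add: detM' abs_mult)
  also have "\<dots> \<le> 1 * (\<bar>det M\<bar> * measure lebesgue D)"
    by (rule mult_right_mono[OF cj]) simp
  also have "\<dots> = measure lebesgue (convex hull (u ` {..N}))"
    using vol[of u] by (simp add: M_def)
  finally show ?thesis by (simp add: u'_def N_def)
qed



lemma rep_exists:
  fixes v :: "nat \<Rightarrow> real^'n"
  assumes nd: "nondegenerate_simplex v"
  shows "\<exists>\<mu>. sum \<mu> {..CARD('n)} = 1 \<and> z = (\<Sum>k\<le>CARD('n). \<mu> k *\<^sub>R v k)"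
proof -
  let ?I = "{..CARD('n)}"
  have inj: "inj_on v ?I" and ind: "\<not> affine_dependent (v ` ?I)"
    using nd by (auto simp: nondegenerate_simplex_def)
  have "of_nat (card (v ` ?I)) = aff_dim (v ` ?I) + 1"
    by (rule aff_dim_affine_independent[OF ind])
  moreover have "card (v ` ?I) = CARD('n) + 1" using inj by (simp add: card_image)
  ultimately have "aff_dim (v ` ?I) = int DIM(real^'n)" by simp
  then have "affine hull (v ` ?I) = UNIV" using aff_dim_eq_full[of "v ` ?I"] by simp
  then have "z \<in> affine hull (v ` ?I)" by simp
  then obtain u where u: "sum u (v ` ?I) = 1" "(\<Sum>w\<in>v ` ?I. u w *\<^sub>R w) = z"
    by (auto simp: affine_hull_finite)
  have "sum (u \<circ> v) ?I = 1" using u(1) inj by (simp add: sum.reindex)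
  moreover have "z = (\<Sum>k\<in>?I. (u \<circ> v) k *\<^sub>R v k)"
    using u(2) inj by (simp add: sum.reindex)
  ultimately show ?thesis by (auto simp: atMost_def)
qed

lemma rep_unique:
  fixes v :: "nat \<Rightarrow> real^'n"
  assumes nd: "nondegenerate_simplex v" and d0: "sum d {..CARD('n)} = 0"
    and dv: "(\<Sum>k\<le>CARD('n). d k *\<^sub>R v k) = 0" and k: "k \<le> CARD('n)"
  shows "d k = 0"
proof (rule ccontr)
  assume nz: "d k \<noteq> 0"
  let ?I = "{..CARD('n)}"
  have inj: "inj_on v ?I" and ind: "\<not> affine_dependent (v ` ?I)"
    using nd by (auto simp: nondegenerate_simplex_def)
  define U where "U = d \<circ> the_inv_into ?I v"
  have Uv: "\<And>i. i \<in> ?I \<Longrightarrow> U (v i) = d i"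
    using inj by (simp add: U_def the_inv_into_f_f)
  have "sum U (v ` ?I) = sum (U \<circ> v) ?I" using inj by (simp add: sum.reindex)
  also have "\<dots> = 0" using d0 Uv by (simp add: atMost_def)
  finally have s1: "sum U (v ` ?I) = 0" .
  have "(\<Sum>w\<in>v ` ?I. U w *\<^sub>R w) = (\<Sum>i\<in>?I. U (v i) *\<^sub>R v i)" using inj by (simp add: sum.reindex)
  also have "\<dots> = 0" using dv Uv by (simp add: atMost_def)
  finally have s2: "(\<Sum>w\<in>v ` ?I. U w *\<^sub>R w) = 0" .
  have "\<exists>w\<in>v ` ?I. U w \<noteq> 0" using k nz Uv by auto
  then have "affine_dependent (v ` ?I)"
    using s1 s2 by (auto simp: affine_dependent_explicit_finite)
  then show False using ind by simp
qed

lemma vec_expand: "(x::real^'n) = (\<Sum>i\<in>UNIV. x $ i *\<^sub>R axis i 1)"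
  by (simp add: vec_eq_iff sum_component axis_def if_distrib cong: if_cong)


lemma hull_rep:
  fixes v :: "nat \<Rightarrow> real^'n"
  assumes nd: "nondegenerate_simplex v" and z: "z \<in> simplex_of v"
  shows "\<exists>t. (\<forall>k\<le>CARD('n). 0 \<le> t k) \<and> sum t {..CARD('n)} = 1 \<and> z = (\<Sum>k\<le>CARD('n). t k *\<^sub>R v k)"
proof -
  let ?I = "{..CARD('n)}"
  have inj: "inj_on v ?I" using nd by (auto simp: nondegenerate_simplex_def)
  obtain u where u: "\<forall>w\<in>v ` ?I. 0 \<le> u w" "sum u (v ` ?I) = 1" "(\<Sum>w\<in>v ` ?I. u w *\<^sub>R w) = z"
    using z by (auto simp: simplex_of_def convex_hull_finite)
  have "sum (u \<circ> v) ?I = 1" using u(2) inj by (simp add: sum.reindex)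
  moreover have "z = (\<Sum>k\<in>?I. (u \<circ> v) k *\<^sub>R v k)"
    using u(3) inj by (simp add: sum.reindex)
  moreover have "\<forall>k\<le>CARD('n). 0 \<le> (u \<circ> v) k" using u(1) by auto
  ultimately show ?thesis by (auto simp: atMost_def)
qed

lemma coeff_bound:
  fixes v :: "nat \<Rightarrow> real^'n"
  assumes nd: "nondegenerate_simplex v"
    and sub: "simplex_of v \<subseteq> unit_cube"
    and sup: "unit_cube \<subseteq> scaled_simplex (real CARD('n)) v"
    and j: "j \<le> CARD('n)"
    and x: "x \<in> unit_cube"
  shows "\<exists>c. sum c {..CARD('n)} = 1 \<and> x = (\<Sum>k\<le>CARD('n). c k *\<^sub>R v k) \<and> \<bar>c j\<bar> \<le> 1"
proof -
  define N where "N = CARD('n)"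
  define I where "I = {..N}"
  have jI: "j \<in> I" using j by (simp add: I_def N_def)
  have finI: "finite I" by (simp add: I_def)
  have vin: "\<And>k i. k \<in> I \<Longrightarrow> 0 \<le> v k $ i \<and> v k $ i \<le> 1"
  proof -
    fix k i assume "k \<in> I"
    then have "v k \<in> simplex_of v" by (auto simp: simplex_of_def I_def N_def intro!: hull_inc)
    then show "0 \<le> v k $ i \<and> v k $ i \<le> 1" using sub by (auto simp: unit_cube_def)
  qed
  have "\<forall>i. \<exists>a. sum a I = 0 \<and> axis i 1 = (\<Sum>k\<in>I. a k *\<^sub>R v k)"
  proof
    fix i :: 'n
    obtain \<mu> where mu: "sum \<mu> I = 1" "v j + axis i 1 = (\<Sum>k\<in>I. \<mu> k *\<^sub>R v k)"
      using rep_exists[OF nd, of "v j + axis i 1"] by (auto simp: I_def N_def atMost_def)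
    define a where "a k = \<mu> k - (if k = j then 1 else 0)" for k
    have "sum a I = 0" using mu(1) jI finI by (simp add: a_def sum_subtractf)
    moreover have "(\<Sum>k\<in>I. a k *\<^sub>R v k) = axis i 1"
      using mu(2) jI finI by (simp add: a_def scaleR_diff_left sum_subtractf if_distrib[of "\<lambda>t. t *\<^sub>R _"] cong: if_cong) (metis add_diff_cancel_left')
    ultimately show "\<exists>a. sum a I = 0 \<and> axis i 1 = (\<Sum>k\<in>I. a k *\<^sub>R v k)" by metis
  qed
  then obtain A where A: "\<And>i. sum (A i) I = 0" "\<And>i. axis i 1 = (\<Sum>k\<in>I. A i k *\<^sub>R v k)"
    by metis
  define gam where "gam y k = (if k = j then 1 else 0) + (\<Sum>i\<in>UNIV. A i k * (y $ i - v j $ i))"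
    for y :: "real^'n" and k
  have gam_sum: "sum (gam y) I = 1" for y
  proof -
    have "sum (gam y) I = (\<Sum>k\<in>I. if k = j then 1 else 0) + (\<Sum>i\<in>UNIV. (y $ i - v j $ i) * sum (A i) I)"
      by (simp add: gam_def sum.distrib sum_distrib_right mult.commute) (rule sum.swap)
    also have "\<dots> = 1" using jI finI A(1) by simp
    finally show ?thesis .
  qed
  have gam_rep: "(\<Sum>k\<in>I. gam y k *\<^sub>R v k) = y" for y
  proof -
    have "(\<Sum>k\<in>I. gam y k *\<^sub>R v k) = (\<Sum>k\<in>I. (if k = j then 1 else 0) *\<^sub>R v k)
        + (\<Sum>k\<in>I. (\<Sum>i\<in>UNIV. A i k * (y $ i - v j $ i)) *\<^sub>R v k)"
      by (simp add: gam_def scaleR_add_left sum.distrib)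
    also have "(\<Sum>k\<in>I. (if k = j then 1 else 0) *\<^sub>R v k) = v j"
      using jI finI by (simp add: if_distrib[of "\<lambda>t. t *\<^sub>R _"] cong: if_cong)
    also have "(\<Sum>k\<in>I. (\<Sum>i\<in>UNIV. A i k * (y $ i - v j $ i)) *\<^sub>R v k)
        = (\<Sum>i\<in>UNIV. (y $ i - v j $ i) *\<^sub>R (\<Sum>k\<in>I. A i k *\<^sub>R v k))"
      by (simp add: scaleR_sum_left scaleR_sum_right sum.swap[of _ I] mult.commute)
    also have "\<dots> = (\<Sum>i\<in>UNIV. (y - v j) $ i *\<^sub>R axis i 1)" by (simp add: A(2))
    also have "\<dots> = y - v j" by (rule vec_expand[symmetric])
    finally show ?thesis by simp
  qed
  have gam_uniq: "\<beta> k = gam y k" if "sum \<beta> I = 1" "y = (\<Sum>k\<in>I. \<beta> k *\<^sub>R v k)" "k \<in> I" for \<beta> y k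
  proof -
    have "sum (\<lambda>k. \<beta> k - gam y k) {..CARD('n)} = 0"
      using that(1) gam_sum[of y] by (simp add: sum_subtractf I_def N_def)
    moreover have "(\<Sum>k\<le>CARD('n). (\<beta> k - gam y k) *\<^sub>R v k) = 0"
      using that(2) gam_rep[of y] by (simp add: scaleR_diff_left sum_subtractf I_def N_def atMost_def)
    ultimately have "\<beta> k - gam y k = 0"
      using rep_unique[OF nd, of "\<lambda>k. \<beta> k - gam y k" k] that(3) by (simp add: I_def N_def)
    then show ?thesis by simp
  qed
  have lower: "gam y k \<ge> - ((real N - 1) / (real N + 1))" if y: "y \<in> unit_cube" and k: "k \<in> I" for y k
  proof -
    define cen where "cen = simplex_centroid v"
    obtain z where z: "z \<in> simplex_of v" and yz: "y = cen + real N *\<^sub>R (z - cen)"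
      using sup y by (auto simp: scaled_simplex_def cen_def N_def)
    obtain t where t: "\<forall>k\<le>CARD('n). 0 \<le> t k" "sum t {..CARD('n)} = 1" "z = (\<Sum>k\<le>CARD('n). t k *\<^sub>R v k)"
      using hull_rep[OF nd z] by blast
    define q where "q = (real N - 1) / (real N + 1)"
    have q: "(real N + 1) * q = real N - 1" by (simp add: q_def)
    define \<beta> where "\<beta> k = real N * t k - q" for k
    have cen_eq: "cen = (\<Sum>k\<in>I. (1 / (real N + 1)) *\<^sub>R v k)"
      by (simp add: cen_def simplex_centroid_def I_def N_def scaleR_sum_right add.commute)
    have "sum \<beta> I = real N * sum t I - real (card I) * q"
      by (simp add: \<beta>_def sum_subtractf sum_distrib_left)
    also have "\<dots> = real N - (real N + 1) * q" using t(2) by (simp add: I_def N_def)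
    also have "\<dots> = 1" using q by simp
    finally have bs: "sum \<beta> I = 1" .
    have t3: "z = (\<Sum>k\<in>I. t k *\<^sub>R v k)" by (simp add: t(3) I_def N_def)
    have mq: "(1 - real N) / (real N + 1) = - q" by (simp add: q_def minus_divide_left)
    have e1: "(1 - real N) *\<^sub>R cen = (\<Sum>k\<in>I. (- q) *\<^sub>R v k)"
      by (simp add: cen_eq scaleR_sum_right mq[symmetric])
    have e2: "real N *\<^sub>R z = (\<Sum>k\<in>I. (real N * t k) *\<^sub>R v k)"
      by (simp add: t3 scaleR_sum_right)
    have "y = (1 - real N) *\<^sub>R cen + real N *\<^sub>R z" using yz by (simp add: algebra_simps)
    also have "\<dots> = (\<Sum>k\<in>I. \<beta> k *\<^sub>R v k)"
      unfolding e1 e2 \<beta>_def by (simp add: sum.distrib[symmetric] scaleR_add_left algebra_simps)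
    finally have br: "y = (\<Sum>k\<in>I. \<beta> k *\<^sub>R v k)" .
    have "gam y k = \<beta> k" using gam_uniq[OF bs br k] by simp
    moreover have "0 \<le> t k" using t(1) k by (simp add: I_def N_def)
    ultimately show ?thesis by (simp add: \<beta>_def q_def)
  qed
  define ng where "ng i k = (if A i k < 0 then - A i k else 0)" for i k
  define ps where "ps i k = (if A i k > 0 then A i k else 0)" for i k
  have Aeq: "A i k = ps i k - ng i k" for i k by (auto simp: ps_def ng_def)
  have ng0: "ng i k \<ge> 0" for i k by (auto simp: ng_def)
  have ps0: "ps i k \<ge> 0" for i k by (auto simp: ps_def)
  have coord: "(\<Sum>k\<in>I. A i k * v k $ i) = 1" for i
  proof -
    have "(axis i 1 :: real^'n) $ i = (\<Sum>k\<in>I. A i k *\<^sub>R v k) $ i" using A(2)[of i] by simp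
    then show ?thesis by (simp add: sum_component)
  qed
  have psng: "sum (ps i) I = sum (ng i) I" for i
    using A(1)[of i] by (simp add: Aeq sum_subtractf)
  have ng1: "sum (ng i) I \<ge> 1" for i
  proof -
    have "(\<Sum>k\<in>I. A i k * v k $ i) \<le> sum (ps i) I"
    proof (rule sum_mono)
      fix k assume k: "k \<in> I"
      show "A i k * v k $ i \<le> ps i k"
        using vin[OF k, of i] by (auto simp: ps_def mult_nonpos_nonneg mult_left_le)
    qed
    then show ?thesis using coord[of i] psng[of i] by simp
  qed
  define yk where "yk k = (\<chi> i. if A i k < 0 then 1 else (0::real))" for k
  have yk_cube: "yk k \<in> unit_cube" for k by (simp add: yk_def unit_cube_def)
  have gy: "gam (yk k) k = (if k = j then 1 else 0) - (\<Sum>i\<in>UNIV. ng i k) - (\<Sum>i\<in>UNIV. A i k * v j $ i)" for k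
  proof -
    have "A i k * (yk k $ i - v j $ i) = - ng i k - A i k * v j $ i" for i
      by (simp add: yk_def ng_def algebra_simps)
    then show ?thesis by (simp add: gam_def sum_subtractf sum_negf)
  qed
  have sumg: "(\<Sum>k\<in>I. gam (yk k) k) = 1 - (\<Sum>i\<in>UNIV. sum (ng i) I)"
  proof -
    have "(\<Sum>k\<in>I. gam (yk k) k) = (\<Sum>k\<in>I. (if k = j then 1 else 0)) - (\<Sum>k\<in>I. \<Sum>i\<in>UNIV. ng i k)
         - (\<Sum>i\<in>UNIV. v j $ i * sum (A i) I)"
      by (simp add: gy sum_subtractf sum_distrib_left sum.swap[of _ I] mult.commute)
    also have "\<dots> = 1 - (\<Sum>i\<in>UNIV. sum (ng i) I)"
      using jI finI A(1) by (simp add: sum.swap[of _ I])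
    finally show ?thesis .
  qed
  define q where "q = (real N - 1) / (real N + 1)"
  have q: "(real N + 1) * q = real N - 1" by (simp add: q_def)
  have q1: "q \<le> 1" by (simp add: q_def)
  have "(\<Sum>k\<in>I. gam (yk k) k) \<ge> (\<Sum>k\<in>I. - q)"
    by (rule sum_mono) (use lower yk_cube in \<open>simp add: q_def\<close>)
  then have "(\<Sum>i\<in>UNIV. sum (ng i) I) \<le> real N"
    using sumg q by (simp add: I_def add.commute)
  then have "(\<Sum>i\<in>(UNIV::'n set). sum (ng i) I - 1) \<le> 0"
    by (simp add: sum_subtractf N_def)
  moreover have "(\<Sum>i\<in>(UNIV::'n set). sum (ng i) I - 1) \<ge> 0"
    using ng1 by (simp add: sum_nonneg)
  ultimately have "(\<Sum>i\<in>(UNIV::'n set). sum (ng i) I - 1) = 0" by linarith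
  then have ngeq: "sum (ng i) I = 1" for i
    using ng1 sum_nonneg_eq_0_iff[of "UNIV::'n set" "\<lambda>i. sum (ng i) I - 1"] by simp
  have tz: "ps i j * (1 - v j $ i) = 0 \<and> ng i j * v j $ i = 0" for i
  proof -
    have nn: "\<And>k. k \<in> I \<Longrightarrow> 0 \<le> ps i k * (1 - v k $ i) + ng i k * v k $ i"
      using vin ps0 ng0 by (simp add: add_nonneg_nonneg)
    have "(\<Sum>k\<in>I. ps i k * (1 - v k $ i) + ng i k * v k $ i) = sum (ps i) I - (\<Sum>k\<in>I. A i k * v k $ i)"
      by (simp add: Aeq algebra_simps sum_subtractf sum.distrib)
    also have "\<dots> = 0" using coord[of i] psng[of i] ngeq[of i] by simp
    finally have "(\<Sum>k\<in>I. ps i k * (1 - v k $ i) + ng i k * v k $ i) = 0" .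
    then have "ps i j * (1 - v j $ i) + ng i j * v j $ i = 0"
      using sum_nonneg_eq_0_iff[of I "\<lambda>k. ps i k * (1 - v k $ i) + ng i k * v k $ i"] finI nn jI by blast
    moreover have "0 \<le> ps i j * (1 - v j $ i)" "0 \<le> ng i j * v j $ i"
      using vin[OF jI, of i] ps0 ng0 by auto
    ultimately show ?thesis by linarith
  qed
  have xc: "0 \<le> x $ i \<and> x $ i \<le> 1" for i using x by (simp add: unit_cube_def)
  have term_le: "A i j * (x $ i - v j $ i) \<le> 0" for i
  proof (cases "A i j > 0")
    case True
    then have "v j $ i = 1" using tz[of i] by (simp add: ps_def)
    then show ?thesis using True xc[of i] by (simp add: mult_nonneg_nonpos)
  next
    case False
    show ?thesis
    proof (cases "A i j < 0")
      case True
      then have "v j $ i = 0" using tz[of i] by (simp add: ng_def)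
      then show ?thesis using True xc[of i] by (simp add: mult_nonpos_nonneg)
    next
      case False
      then have "A i j = 0" using \<open>\<not> A i j > 0\<close> by simp
      then show ?thesis by simp
    qed
  qed
  have up: "gam x j \<le> 1"
    using term_le by (simp add: gam_def sum_nonpos)
  have lo: "gam x j \<ge> -1" using lower[OF x jI] q1 unfolding q_def by linarith
  show ?thesis
  proof (intro exI conjI)
    show "sum (gam x) {..CARD('n)} = 1" using gam_sum[of x] by (simp add: I_def N_def)
    show "x = (\<Sum>k\<le>CARD('n). gam x k *\<^sub>R v k)" using gam_rep[of x] by (simp add: I_def N_def)
    show "\<bar>gam x j\<bar> \<le> 1" using up lo by simp
  qed
qed


lemma simplex_measure_wphi:
  fixes w :: "nat \<Rightarrow> real^'n"
  shows "measure lebesgue (convex hull ((wphi \<circ> w) ` {..CARD('n)})) = measure lebesgue (simplex_of w)"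
proof -
  have "convex hull ((wphi \<circ> w) ` {..CARD('n)}) = wphi ` (simplex_of w)"
    by (simp only: simplex_of_def image_comp[symmetric] convex_hull_linear_image[OF linear_wphi])
  moreover have "simplex_of w \<in> sets borel"
    unfolding simplex_of_def
    by (intro borel_closed compact_imp_closed compact_convex_hull finite_imp_compact) simp
  ultimately show ?thesis by (simp add: measure_wphi)
qed

theorem mainTheorem4:
  fixes v :: "nat \<Rightarrow> real^'n" and j :: nat and x :: "real^'n"
  assumes "nondegenerate_simplex v"
    and "simplex_of v \<subseteq> unit_cube"
    and "unit_cube \<subseteq> scaled_simplex (real CARD('n)) v"
    and "j \<le> CARD('n)"
    and "x \<in> unit_cube"
  shows "measure lebesgue (simplex_of (v(j := x))) \<le> measure lebesgue (simplex_of v)"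
proof -
  obtain c where c: "sum c {..CARD('n)} = 1" "x = (\<Sum>k\<le>CARD('n). c k *\<^sub>R v k)" "\<bar>c j\<bar> \<le> 1"
    using coeff_bound[OF assms] by blast
  define u where "u = wphi \<circ> v"
  have card: "CARD('n wo) = CARD('n)" by (rule card_wo)
  have y: "wphi x = (\<Sum>k\<le>CARD('n wo). c k *\<^sub>R u k)"
    by (simp add: c(2) card u_def linear_sum[OF linear_wphi] linear_scale[OF linear_wphi] o_def)
  have m: "measure lebesgue (convex hull ((u(j := wphi x)) ` {..CARD('n wo)}))
        \<le> measure lebesgue (convex hull (u ` {..CARD('n wo)}))"
    by (rule vol_replace_wo[OF _ _ y]) (use assms(4) c(1) c(3) card in auto)
  have eq: "u(j := wphi x) = wphi \<circ> (v(j := x))" by (auto simp: u_def)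
  have "measure lebesgue (convex hull ((wphi \<circ> (v(j := x))) ` {..CARD('n)}))
        \<le> measure lebesgue (convex hull ((wphi \<circ> v) ` {..CARD('n)}))"
    using m unfolding eq card by (simp only: u_def)
  then show ?thesis unfolding simplex_measure_wphi .
qed

end
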